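(* Let $C\subset\mathbb R^3$ be an embedded curve (closed or non-closed) with nowhere vanishing curvature, and let $F,G\in\mathcal D(|C|)$ be developable strips written in normal forms. Then $F(\Omega^+_\epsilon)\cap G(\Omega^-_\epsilon)=\emptyset$ for all sufficiently small $\epsilon>0$.
   Context: $C$ has length $l>0$ and an orientation; $-C$ is $C$ with opposite orientation. $J=[-l/2,l/2]$ if $C$ is non-closed and $J=\mathbb R/l\mathbb Z$ if $C$ is closed. $\Omega^+_\epsilon:=J\times(0,\epsilon)$, $\Omega^-_\epsilon:=J\times(-\epsilon,0)$. A developable strip along $C$ is the germ of a $C^\infty$ embedding $f(u,v)=f(u,0)+v\,\xi_f(u)$ with $\mathbf c_f(u)=f(u,0)$ parametrizing $C$, $\xi_f$ a unit vector field, and zero Gaussian curvature; with the Frenet frame $(\mathbf e,\mathbf n,\mathbf b)$ of $\mathbf c_f$ write $\xi_f=\cos\beta_f\,\mathbf e+\sin\beta_f(\cos\alpha_f\,\mathbf n+\sin\alpha_f\,\mathbf b)$. $\mathcal D(C)$: strips with $\mathbf c_f$ inducing the orientation of $C$ and $0<|\cos\alpha_f|<1$, normalized so $0<|\alpha_f|<\pi/2$, $0<\beta_f<\pi$ (hence $\xi_f\cdot\mathbf n>0$). $\mathcal D(|C|):=\mathcal D(C)\cup\mathcal D(-C)$. A normal form is such a strip $F(s,v)$ defined near $J\times\{0\}$ with $s\mapsto F(s,0)$ an arc-length parametrization of $C$ and $\partial_vF(s,0)=\xi_F(s)$. *)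

theory Defs
  imports "HOL-Analysis.Analysis"
begin

text \<open>Parameter domain J.  For a closed curve (cl = True) J = R/lZ is represented by all of R
  (all data being l-periodic); for a non-cl curve J = [-l/2, l/2].\<close>
definition Jset :: "bool \<Rightarrow> real \<Rightarrow> real set" where
  "Jset cl l = (if cl then UNIV else {-l/2..l/2})"

text \<open>A fundamental domain of J (used to express injectivity / embeddedness).\<close>
definition Jfund :: "bool \<Rightarrow> real \<Rightarrow> real set" where
  "Jfund cl l = (if cl then {-l/2..<l/2} else {-l/2..l/2})"

definition Omega_plus :: "bool \<Rightarrow> real \<Rightarrow> real \<Rightarrow> (real \<times> real) set" where
  "Omega_plus cl l \<epsilon> = {(s, v). s \<in> Jset cl l \<and> 0 < v \<and> v < \<epsilon>}"

definition Omega_minus :: "bool \<Rightarrow> real \<Rightarrow> real \<Rightarrow> (real \<times> real) set" where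
  "Omega_minus cl l \<epsilon> = {(s, v). s \<in> Jset cl l \<and> -\<epsilon> < v \<and> v < 0}"

definition smooth_on :: "real set \<Rightarrow> (real \<Rightarrow> real^3) \<Rightarrow> bool" where
  "smooth_on U f \<longleftrightarrow> (\<exists>D :: nat \<Rightarrow> real \<Rightarrow> real^3. D 0 = f \<and>
      (\<forall>k. \<forall>t\<in>U. (D k has_vector_derivative D (Suc k) t) (at t)))"

definition deriv1 :: "(real \<Rightarrow> real^3) \<Rightarrow> real \<Rightarrow> real^3" where
  "deriv1 f t = vector_derivative f (at t)"

definition deriv2 :: "(real \<Rightarrow> real^3) \<Rightarrow> real \<Rightarrow> real^3" where
  "deriv2 f t = vector_derivative (deriv1 f) (at t)"

definition frenet_e :: "(real \<Rightarrow> real^3) \<Rightarrow> real \<Rightarrow> real^3" where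
  "frenet_e c s = deriv1 c s"

definition frenet_n :: "(real \<Rightarrow> real^3) \<Rightarrow> real \<Rightarrow> real^3" where
  "frenet_n c s = (1 / norm (deriv2 c s)) *\<^sub>R deriv2 c s"

definition frenet_b :: "(real \<Rightarrow> real^3) \<Rightarrow> real \<Rightarrow> real^3" where
  "frenet_b c s = cross3 (frenet_e c s) (frenet_n c s)"

definition ruled :: "(real \<Rightarrow> real^3) \<Rightarrow> (real \<Rightarrow> real^3) \<Rightarrow> real \<times> real \<Rightarrow> real^3" where
  "ruled c \<xi> = (\<lambda>(u, v). c u + v *\<^sub>R \<xi> u)"

definition pd_u :: "(real \<times> real \<Rightarrow> real^3) \<Rightarrow> real \<times> real \<Rightarrow> real^3" where
  "pd_u f = (\<lambda>(u, v). vector_derivative (\<lambda>x. f (x, v)) (at u))"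

definition pd_v :: "(real \<times> real \<Rightarrow> real^3) \<Rightarrow> real \<times> real \<Rightarrow> real^3" where
  "pd_v f = (\<lambda>(u, v). vector_derivative (\<lambda>y. f (u, y)) (at v))"

definition gauss_curv :: "(real \<times> real \<Rightarrow> real^3) \<Rightarrow> real \<times> real \<Rightarrow> real" where
  "gauss_curv f p =
     (let fu = pd_u f p; fv = pd_v f p;
          fuu = pd_u (pd_u f) p; fuv = pd_v (pd_u f) p; fvv = pd_v (pd_v f) p;
          \<nu> = (1 / norm (cross3 fu fv)) *\<^sub>R cross3 fu fv;
          E = fu \<bullet> fu; F = fu \<bullet> fv; G = fv \<bullet> fv;
          L = fuu \<bullet> \<nu>; M = fuv \<bullet> \<nu>; N = fvv \<bullet> \<nu>
      in (L * N - M\<^sup>2) / (E * G - F\<^sup>2))"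

definition embedded_curve :: "bool \<Rightarrow> real \<Rightarrow> (real \<Rightarrow> real^3) \<Rightarrow> bool" where
  "embedded_curve cl l \<gamma> \<longleftrightarrow>
     0 < l \<and>
     (\<exists>U. open U \<and> Jset cl l \<subseteq> U \<and> smooth_on U \<gamma>) \<and>
     (cl \<longrightarrow> (\<forall>s. \<gamma> (s + l) = \<gamma> s)) \<and>
     (\<forall>s\<in>Jset cl l. norm (deriv1 \<gamma> s) = 1) \<and>
     (\<forall>s\<in>Jset cl l. deriv2 \<gamma> s \<noteq> 0) \<and>
     inj_on \<gamma> (Jfund cl l)"

text \<open>Germ of an embedding near J x {0}: an injective immersion on an open
  neighbourhood W of J x {0} (injective modulo the period for cl curves).\<close>
definition strip_embedding_on ::
  "bool \<Rightarrow> real \<Rightarrow> (real \<times> real \<Rightarrow> real^3) \<Rightarrow> (real \<times> real) set \<Rightarrow> bool" where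
  "strip_embedding_on cl l f W \<longleftrightarrow>
     open W \<and> {(s, 0) | s. s \<in> Jset cl l} \<subseteq> W \<and>
     (\<forall>p\<in>W. cross3 (pd_u f p) (pd_v f p) \<noteq> 0) \<and>
     (\<forall>p\<in>W. \<forall>q\<in>W. f p = f q \<longrightarrow> snd p = snd q \<and>
        (if cl then (\<exists>k::int. fst q = fst p + of_int k * l) else fst p = fst q))"

text \<open>Normal form F(s,v) = c(s) + v xi(s) of a developable strip in D(|C|):
  c is an arc-length parametrisation of C (either orientation, with a shift of
  the parameter allowed for cl C), xi is a unit vector field, F is (the germ
  of) a smooth embedding with zero Gaussian curvature, and
  xi = cos beta e + sin beta (cos alpha n + sin alpha b) with respect to the
  Frenet frame of c, where 0 < |alpha| < pi/2 and 0 < beta < pi.\<close>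
definition normal_form_strip ::
  "bool \<Rightarrow> real \<Rightarrow> (real \<Rightarrow> real^3) \<Rightarrow> (real \<Rightarrow> real^3) \<Rightarrow> (real \<Rightarrow> real^3) \<Rightarrow> bool" where
  "normal_form_strip cl l \<gamma> c \<xi> \<longleftrightarrow>
     (\<exists>\<sigma> a::real. (\<sigma> = 1 \<or> \<sigma> = -1) \<and> (\<not> cl \<longrightarrow> a = 0) \<and>
        (\<forall>s\<in>Jset cl l. c s = \<gamma> (\<sigma> * s + a))) \<and>
     (cl \<longrightarrow> (\<forall>s. c (s + l) = c s \<and> \<xi> (s + l) = \<xi> s)) \<and>
     (\<exists>U. open U \<and> Jset cl l \<subseteq> U \<and> smooth_on U c \<and> smooth_on U \<xi>) \<and>
     (\<forall>s\<in>Jset cl l. norm (\<xi> s) = 1) \<and>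
     (\<exists>W. strip_embedding_on cl l (ruled c \<xi>) W \<and>
        (\<forall>p\<in>W. gauss_curv (ruled c \<xi>) p = 0)) \<and>
     (\<exists>\<alpha> \<beta> :: real \<Rightarrow> real. \<forall>s\<in>Jset cl l.
        \<xi> s = cos (\<beta> s) *\<^sub>R frenet_e c s
               + sin (\<beta> s) *\<^sub>R (cos (\<alpha> s) *\<^sub>R frenet_n c s + sin (\<alpha> s) *\<^sub>R frenet_b c s) \<and>
        0 < \<bar>\<alpha> s\<bar> \<and> \<bar>\<alpha> s\<bar> < pi / 2 \<and> 0 < \<beta> s \<and> \<beta> s < pi)"

end

theory Submission
  imports Defs
begin

lemma ext_closure:
  fixes f g :: "real \<Rightarrow> 'b::real_normed_vector"
  assumes "a < b" "continuous_on {a..b} f" "continuous_on {a..b} g"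
    "\<And>x. x \<in> {a<..<b} \<Longrightarrow> f x = g x" "x \<in> {a..b}"
  shows "f x = g x"
proof -
  have "(\<lambda>x. f x - g x) x = 0"
    apply (rule continuous_constant_on_closure[of "{a<..<b}"])
    using assms by (auto intro!: continuous_intros)
  then show ?thesis by simp
qed

lemma period_deriv:
  fixes f :: "real \<Rightarrow> 'b::real_normed_vector"
  assumes "\<And>t. f (t + l) = f t" "\<And>t. (f has_vector_derivative f' t) (at t)"
  shows "f' (t + l) = f' t"
proof -
  have d: "((\<lambda>x. x + l) has_vector_derivative 1) (at t)"
    by (auto intro!: derivative_eq_intros)
  have "((\<lambda>x. f (x + l)) has_vector_derivative f' (t + l)) (at t)"
    using vector_diff_chain_at[OF d, of f "f' (t+l)"] assms(2)
    by (auto simp: o_def)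
  then have "(f has_vector_derivative f' (t + l)) (at t)" using assms(1) by simp
  then show ?thesis using assms(2) vector_derivative_unique_at by blast
qed

lemma period_int:
  fixes f :: "real \<Rightarrow> 'b"
  assumes "\<And>t. f (t + l) = f t"
  shows "f (t + real_of_int k * l) = f t"
proof (induction k arbitrary: t rule: int_induct[where k=0])
  case base then show ?case by simp
next
  case (step1 i) then show ?case using assms[of "t + real_of_int i * l"] by (simp add: algebra_simps)
next
  case (step2 i) then show ?case using assms[of "t + real_of_int (i - 1) * l"] by (simp add: algebra_simps)
qed

lemma reduce_period:
  assumes "l > 0"
  shows "\<exists>k::int. t - real_of_int k * l \<in> {-l/2..<l/2}"
proof -
  define k where "k = floor ((t + l/2) / l)"
  have "real_of_int k \<le> (t + l/2) / l" "(t + l/2) / l < real_of_int k + 1"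
    unfolding k_def by linarith+
  then have "real_of_int k * l \<le> t + l/2" "t + l/2 < (real_of_int k + 1) * l"
    using assms by (auto simp: field_simps)
  then show ?thesis by (intro exI[of _ k]) (auto simp: algebra_simps)
qed

lemma smooth_facts:
  assumes "smooth_on U f" "open U"
  obtains g1 g2 where "\<And>t. t\<in>U \<Longrightarrow> (f has_vector_derivative g1 t) (at t)"
    "\<And>t. t\<in>U \<Longrightarrow> (g1 has_vector_derivative g2 t) (at t)"
    "continuous_on U f" "continuous_on U g1" "continuous_on U g2"
    "\<And>t. t\<in>U \<Longrightarrow> deriv1 f t = g1 t" "\<And>t. t\<in>U \<Longrightarrow> deriv2 f t = g2 t"
proof -
  obtain D where D0: "D 0 = f" and D: "\<And>k t. t\<in>U \<Longrightarrow> (D k has_vector_derivative D (Suc k) t) (at t)"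
    using assms(1) unfolding smooth_on_def by blast
  have cont: "continuous_on U (D k)" for k
    using D by (meson continuous_at_imp_continuous_on has_vector_derivative_continuous)
  have d1: "deriv1 f t = D 1 t" if "t \<in> U" for t
    using D[OF that, of 0] D0 by (simp add: deriv1_def vector_derivative_at)
  have d2: "deriv2 f t = D 2 t" if "t \<in> U" for t
  proof -
    have "(deriv1 f has_vector_derivative D 2 t) (at t)"
      apply (rule has_vector_derivative_transform_within_open[OF _ assms(2) that])
      using D[OF that, of 1] d1 by (auto simp: numeral_2_eq_2)
    then show ?thesis by (simp add: deriv2_def vector_derivative_at)
  qed
  show ?thesis
    apply (rule that[of "D 1" "D 2"])
    using D[of _ 0] D[of _ 1] cont[of 0] cont[of 1] cont[of 2] D0 d1 d2
    by (auto simp: numeral_2_eq_2)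
qed

definition Iset :: "bool \<Rightarrow> real \<Rightarrow> real set" where
  "Iset cl l = (if cl then UNIV else {-l/2<..<l/2})"

lemma Iset_facts: "open (Iset cl l)" "Iset cl l \<subseteq> Jset cl l"
  unfolding Iset_def Jset_def by auto

lemma extend_I:
  fixes f g :: "real \<Rightarrow> 'b::real_normed_vector"
  assumes "0 < l" "continuous_on (Jset cl l) f" "continuous_on (Jset cl l) g"
    "\<And>x. x \<in> Iset cl l \<Longrightarrow> f x = g x" "x \<in> Jset cl l"
  shows "f x = g x"
proof (cases cl)
  case True then show ?thesis using assms by (simp add: Iset_def)
next
  case False then show ?thesis
    using ext_closure[of "-l/2" "l/2" f g x] assms by (simp add: Iset_def Jset_def)
qed

lemma aff_J:
  assumes "\<sigma> = 1 \<or> \<sigma> = -1" "\<not> cl \<longrightarrow> a = 0" "s \<in> Jset cl l"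
  shows "\<sigma> * s + a \<in> Jset cl l"
  using assms by (auto simp: Jset_def)

lemma reparam:
  fixes \<gamma> c g1 g2 :: "real \<Rightarrow> real^3"
  assumes l: "0 < l" and U: "open U" "Jset cl l \<subseteq> U"
    and g1: "\<And>t. t\<in>U \<Longrightarrow> (\<gamma> has_vector_derivative g1 t) (at t)"
    and g2: "\<And>t. t\<in>U \<Longrightarrow> (g1 has_vector_derivative g2 t) (at t)"
    and cg1: "continuous_on U g1" and cg2: "continuous_on U g2"
    and sa: "\<sigma> = 1 \<or> \<sigma> = -1" "\<not> cl \<longrightarrow> a = 0"
    and cJ: "\<And>s. s \<in> Jset cl l \<Longrightarrow> c s = \<gamma> (\<sigma> * s + a)"
    and U': "open U'" "Jset cl l \<subseteq> U'" "smooth_on U' c"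
  shows "\<And>s. s \<in> Jset cl l \<Longrightarrow> deriv1 c s = \<sigma> *\<^sub>R g1 (\<sigma> * s + a) \<and> deriv2 c s = g2 (\<sigma> * s + a)"
proof -
  fix s assume sJ: "s \<in> Jset cl l"
  obtain h1 h2 where h1: "\<And>t. t\<in>U' \<Longrightarrow> (c has_vector_derivative h1 t) (at t)"
    and h2: "\<And>t. t\<in>U' \<Longrightarrow> (h1 has_vector_derivative h2 t) (at t)"
    and ch1: "continuous_on U' h1" and ch2: "continuous_on U' h2"
    and dh1: "\<And>t. t\<in>U' \<Longrightarrow> deriv1 c t = h1 t" and dh2: "\<And>t. t\<in>U' \<Longrightarrow> deriv2 c t = h2 t"
    using smooth_facts[OF U'(3,1)] by metis
  have affd: "((\<lambda>x. \<sigma> * x + a) has_vector_derivative \<sigma>) (at x)" for x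
    by (auto intro!: derivative_eq_intros)
  have affJ: "\<And>x. x \<in> Jset cl l \<Longrightarrow> \<sigma> * x + a \<in> U" using aff_J[OF sa] U by blast
  have I1: "h1 x = \<sigma> *\<^sub>R g1 (\<sigma> * x + a)" if xI: "x \<in> Iset cl l" for x
  proof -
    have xJ: "x \<in> Jset cl l" using xI Iset_facts by blast
    have "((\<lambda>x. \<gamma> (\<sigma> * x + a)) has_vector_derivative \<sigma> *\<^sub>R g1 (\<sigma> * x + a)) (at x)"
      using vector_diff_chain_at[OF affd g1[OF affJ[OF xJ]]] by (simp add: o_def)
    then have "(c has_vector_derivative \<sigma> *\<^sub>R g1 (\<sigma> * x + a)) (at x)"
      apply (rule has_vector_derivative_transform_within_open[OF _ Iset_facts(1) xI])
      using cJ Iset_facts(2) by (metis subsetD)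
    then show ?thesis using h1[of x] xJ U' vector_derivative_unique_at by blast
  qed
  have I2: "h2 x = g2 (\<sigma> * x + a)" if xI: "x \<in> Iset cl l" for x
  proof -
    have xJ: "x \<in> Jset cl l" using xI Iset_facts by blast
    have "((\<lambda>x. g1 (\<sigma> * x + a)) has_vector_derivative \<sigma> *\<^sub>R g2 (\<sigma> * x + a)) (at x)"
      using vector_diff_chain_at[OF affd g2[OF affJ[OF xJ]]] by (simp add: o_def)
    then have "((\<lambda>x. \<sigma> *\<^sub>R g1 (\<sigma> * x + a)) has_vector_derivative \<sigma> *\<^sub>R \<sigma> *\<^sub>R g2 (\<sigma> * x + a)) (at x)"
      by (rule bounded_linear.has_vector_derivative[OF bounded_linear_scaleR_right])
    then have "(h1 has_vector_derivative \<sigma> *\<^sub>R \<sigma> *\<^sub>R g2 (\<sigma> * x + a)) (at x)"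
      apply (rule has_vector_derivative_transform_within_open[OF _ Iset_facts(1) xI])
      using I1 by auto
    then have "h2 x = \<sigma> *\<^sub>R \<sigma> *\<^sub>R g2 (\<sigma> * x + a)"
      using h2[of x] xJ U' vector_derivative_unique_at by blast
    then show ?thesis using sa by auto
  qed
  have cc1: "continuous_on (Jset cl l) (\<lambda>x. \<sigma> *\<^sub>R g1 (\<sigma> * x + a))"
    apply (intro continuous_intros continuous_on_compose2[OF cg1])
    using affJ by auto
  have cc2: "continuous_on (Jset cl l) (\<lambda>x. g2 (\<sigma> * x + a))"
    apply (intro continuous_intros continuous_on_compose2[OF cg2])
    using affJ by auto
  have "h1 s = \<sigma> *\<^sub>R g1 (\<sigma> * s + a)"
    by (rule extend_I[OF l continuous_on_subset[OF ch1 U'(2)] cc1 I1 sJ])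
  moreover have "h2 s = g2 (\<sigma> * s + a)"
    by (rule extend_I[OF l continuous_on_subset[OF ch2 U'(2)] cc2 I2 sJ])
  ultimately show "deriv1 c s = \<sigma> *\<^sub>R g1 (\<sigma> * s + a) \<and> deriv2 c s = g2 (\<sigma> * s + a)"
    using dh1 dh2 sJ U' by auto
qed

lemma orth:
  fixes g1 g2 :: "real \<Rightarrow> real^3"
  assumes l: "0 < l" and U: "open U" "Jset cl l \<subseteq> U"
    and g2: "\<And>t. t\<in>U \<Longrightarrow> (g1 has_vector_derivative g2 t) (at t)"
    and cg1: "continuous_on U g1" and cg2: "continuous_on U g2"
    and n1: "\<And>t. t \<in> Jset cl l \<Longrightarrow> norm (g1 t) = 1"
    and tJ: "t \<in> Jset cl l"
  shows "g1 t \<bullet> g2 t = 0"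
proof -
  have I: "g1 x \<bullet> g2 x = 0" if xI: "x \<in> Iset cl l" for x
  proof -
    have xJ: "x \<in> Jset cl l" using xI Iset_facts by blast
    have "((\<lambda>x. g1 x \<bullet> g1 x) has_vector_derivative (g1 x \<bullet> g2 x + g2 x \<bullet> g1 x)) (at x)"
      using bounded_bilinear.has_vector_derivative[OF bounded_bilinear_inner g2 g2] xJ U by blast
    then have "((\<lambda>x. 1::real) has_vector_derivative (g1 x \<bullet> g2 x + g2 x \<bullet> g1 x)) (at x)"
      apply (rule has_vector_derivative_transform_within_open[OF _ Iset_facts(1) xI])
      using n1 Iset_facts(2) by (metis inner_commute norm_eq_1 subsetD)
    then have "g1 x \<bullet> g2 x + g2 x \<bullet> g1 x = 0"
      using vector_derivative_unique_at has_vector_derivative_const by blast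
    then show ?thesis by (simp add: inner_commute)
  qed
  have c: "continuous_on (Jset cl l) (\<lambda>x. g1 x \<bullet> g2 x)"
    using continuous_on_subset[OF cg1 U(2)] continuous_on_subset[OF cg2 U(2)]
    by (intro continuous_intros) auto
  show ?thesis using extend_I[OF l c _ I tJ] by simp
qed

definition nrm :: "(real \<Rightarrow> real^3) \<Rightarrow> real \<Rightarrow> real^3" where
  "nrm g t = (1 / norm (g t)) *\<^sub>R g t"

lemma nrm_cont:
  assumes "continuous_on S g" "\<And>t. t \<in> S \<Longrightarrow> g t \<noteq> 0"
  shows "continuous_on S (nrm g)"
  unfolding nrm_def using assms by (intro continuous_intros) auto

lemma nrm_norm: "g t \<noteq> 0 \<Longrightarrow> norm (nrm g t) = 1"
  unfolding nrm_def by simp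

lemma frenet_pos:
  fixes e n x :: "real^3"
  assumes "x = cos \<beta> *\<^sub>R e + sin \<beta> *\<^sub>R (cos \<alpha> *\<^sub>R n + sin \<alpha> *\<^sub>R cross3 e n)"
    "e \<bullet> n = 0" "norm n = 1" "0 < \<bar>\<alpha>\<bar>" "\<bar>\<alpha>\<bar> < pi / 2" "0 < \<beta>" "\<beta> < pi"
  shows "x \<bullet> n > 0"
proof -
  have "n \<bullet> n = 1" using assms(3) by (simp add: norm_eq_1)
  then have "x \<bullet> n = sin \<beta> * cos \<alpha>"
    using assms(1,2) by (simp add: inner_add_left dot_cross_self)
  moreover have "sin \<beta> > 0" using assms(6,7) by (simp add: sin_gt_zero)
  moreover have "cos \<alpha> > 0" using assms(4,5) by (intro cos_gt_zero_pi) auto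
  ultimately show ?thesis by simp
qed

lemma unif_pos:
  fixes q :: "real \<Rightarrow> real"
  assumes "compact K" "K \<noteq> {}" "continuous_on K q" "\<And>s. s \<in> K \<Longrightarrow> q s > 0"
    "\<And>s. s \<in> S \<Longrightarrow> \<exists>s0\<in>K. q s = q s0"
  shows "\<exists>\<delta>>0. \<forall>s\<in>S. \<delta> \<le> q s"
proof -
  obtain x where x: "x \<in> K" "\<forall>y\<in>K. q x \<le> q y"
    using continuous_attains_inf[OF assms(1-3)] by blast
  show ?thesis using x assms(4,5) by (intro exI[of _ "q x"]) force
qed

lemma onorm_sc: "onorm (\<lambda>x::real. x *\<^sub>R (f::'a::real_normed_vector)) = norm f"
  using onorm_scaleR_left[OF bounded_linear_ident, of f] onorm_id[where 'a=real] by simp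

lemma vd_bound:
  fixes f f' :: "real \<Rightarrow> 'a::real_normed_vector"
  assumes "convex S" "\<And>x. x \<in> S \<Longrightarrow> (f has_vector_derivative f' x) (at x)"
    "\<And>x. x \<in> S \<Longrightarrow> norm (f' x) \<le> B" "x \<in> S" "y \<in> S"
  shows "norm (f x - f y) \<le> B * \<bar>x - y\<bar>"
proof -
  have "norm (f x - f y) \<le> B * norm (x - y)"
    apply (rule differentiable_bound[OF assms(1) _ _ assms(4,5), where f' = "\<lambda>x h. h *\<^sub>R f' x"])
    using assms(2) apply (simp add: has_vector_derivative_def has_derivative_at_withinI)
    using assms(3) by (simp add: onorm_sc)
  then show ?thesis by simp
qed

lemma taylor2:
  fixes \<gamma> g1 g2 :: "real \<Rightarrow> real^3"
  assumes K: "convex K" "t1 \<in> K" "t2 \<in> K"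
    and d1: "\<And>t. t\<in>K \<Longrightarrow> (\<gamma> has_vector_derivative g1 t) (at t)"
    and d2: "\<And>t. t\<in>K \<Longrightarrow> (g1 has_vector_derivative g2 t) (at t)"
    and M: "\<And>t. t\<in>K \<Longrightarrow> norm (g2 t) \<le> M"
  shows "norm (\<gamma> t2 - \<gamma> t1 - (t2 - t1) *\<^sub>R g1 t1) \<le> M * (t2 - t1)^2"
proof -
  let ?S = "closed_segment t1 t2"
  have S: "?S \<subseteq> K" using closed_segment_subset K by blast
  have t1S: "t1 \<in> ?S" and t2S: "t2 \<in> ?S" by auto
  have b1: "norm (g1 x - g1 t1) \<le> M * \<bar>t2 - t1\<bar>" if "x \<in> ?S" for x
  proof -
    have "norm (g1 x - g1 t1) \<le> M * \<bar>x - t1\<bar>"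
      by (rule vd_bound[OF convex_closed_segment _ _ that t1S]) (use d2 M S in auto)
    moreover have "\<bar>x - t1\<bar> \<le> \<bar>t2 - t1\<bar>" using segment_bound1[OF that] by simp
    moreover have "M \<ge> 0" using M[OF K(2)] norm_ge_zero order_trans by blast
    ultimately show ?thesis by (meson mult_left_mono order_trans)
  qed
  have "norm ((\<lambda>x. \<gamma> x - x *\<^sub>R g1 t1) t2 - (\<lambda>x. \<gamma> x - x *\<^sub>R g1 t1) t1) \<le> (M * \<bar>t2 - t1\<bar>) * \<bar>t2 - t1\<bar>"
    apply (rule vd_bound[OF convex_closed_segment _ _ t2S t1S, where f' = "\<lambda>x. g1 x - g1 t1"])
    using d1 S apply (force intro!: derivative_eq_intros)
    using b1 by auto
  then show ?thesis by (simp add: algebra_simps power2_eq_square abs_mult_self_eq)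
qed

lemma core:
  fixes \<gamma> g1 g2 :: "real \<Rightarrow> real^3" and X Y n :: "real^3"
  assumes K: "convex K" "t1 \<in> K" "t2 \<in> K"
    and d1: "\<And>t. t\<in>K \<Longrightarrow> (\<gamma> has_vector_derivative g1 t) (at t)"
    and d2: "\<And>t. t\<in>K \<Longrightarrow> (g1 has_vector_derivative g2 t) (at t)"
    and M: "\<And>t. t\<in>K \<Longrightarrow> norm (g2 t) \<le> M" "M > 0"
    and h: "\<bar>t2 - t1\<bar> \<le> 1 / (2 * M)"
    and eq: "\<gamma> t1 + v *\<^sub>R X = \<gamma> t2 + v' *\<^sub>R Y"
    and v: "0 < v" "v < \<epsilon>" "v' < 0" "-\<epsilon> < v'"
    and XY: "norm X = 1" "norm Y = 1"
    and g1: "norm (g1 t1) = 1" "g1 t1 \<bullet> n = 0" "norm n = 1"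
    and \<delta>: "\<delta> \<le> X \<bullet> n" "\<delta> / 2 \<le> Y \<bullet> n" "16 * M * \<epsilon> \<le> \<delta>"
  shows False
proof -
  define h where "h = t2 - t1"
  define d where "d = \<gamma> t2 - \<gamma> t1"
  define E where "E = d - h *\<^sub>R g1 t1"
  define m where "m = v - v'"
  have dv: "d = v *\<^sub>R X - v' *\<^sub>R Y" using eq unfolding d_def by (simp add: algebra_simps)
  have E: "norm E \<le> M * h^2" unfolding E_def d_def h_def by (rule taylor2[OF K d1 d2 M(1)])
  have hM: "M * h^2 \<le> \<bar>h\<bar> / 2"
  proof -
    have "M * h^2 = (M * \<bar>h\<bar>) * \<bar>h\<bar>" by (simp add: power2_eq_square abs_mult_self_eq)
    also have a: "M * \<bar>h\<bar> \<le> 1/2" using h M(2) unfolding h_def by (simp add: field_simps)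
    have "(M * \<bar>h\<bar>) * \<bar>h\<bar> \<le> 1/2 * \<bar>h\<bar>" by (rule mult_right_mono[OF a]) simp
    finally show ?thesis by simp
  qed
  have nd: "norm d \<le> m"
  proof -
    have "norm d \<le> norm (v *\<^sub>R X) + norm (v' *\<^sub>R Y)" unfolding dv by (rule norm_triangle_ineq4)
    then show ?thesis using v XY unfolding m_def by simp
  qed
  have "\<bar>h\<bar> = norm (h *\<^sub>R g1 t1)" using g1 by simp
  also have "h *\<^sub>R g1 t1 = d - E" unfolding E_def by simp
  also have "norm (d - E) \<le> norm d + norm E" by (rule norm_triangle_ineq4)
  finally have "\<bar>h\<bar> \<le> m + \<bar>h\<bar> / 2" using nd E hM by linarith
  then have habs: "\<bar>h\<bar> \<le> 2 * m" by linarith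
  have "d \<bullet> n = E \<bullet> n" unfolding E_def using g1 by (simp add: inner_diff_left)
  also have "\<dots> \<le> norm E * norm n" by (rule norm_cauchy_schwarz)
  finally have up: "d \<bullet> n \<le> M * h^2" using E g1 by simp
  have "\<delta> > 0" using \<delta> M v by (smt (verit) mult_pos_pos)
  have "d \<bullet> n = v * (X \<bullet> n) + (- v') * (Y \<bullet> n)" unfolding dv by (simp add: inner_diff_left)
  moreover have "v * \<delta> \<le> v * (X \<bullet> n)" using v \<delta> by (simp add: mult_left_mono)
  moreover have "(- v') * (\<delta>/2) \<le> (- v') * (Y \<bullet> n)" using v \<delta> by (simp add: mult_left_mono)
  moreover have "(v - v') * (\<delta> / 2) = v * (\<delta> / 2) + (-v') * (\<delta> / 2)" by (simp add: field_simps)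
  moreover have "v * (\<delta> / 2) \<le> v * \<delta>" using v \<open>\<delta> > 0\<close> by simp
  ultimately have low: "m * (\<delta> / 2) \<le> d \<bullet> n" unfolding m_def by linarith
  have "h^2 \<le> (2*m)^2" using habs by (metis abs_ge_zero power2_abs power_mono)
  then have "M * h^2 \<le> M * (4 * m^2)" using M(2) by (simp add: power_mult_distrib)
  then have "m * (\<delta> / 2) \<le> m * (4 * M * m)" using low up by (simp add: power2_eq_square algebra_simps)
  moreover have "m > 0" using v unfolding m_def by simp
  ultimately have "\<delta> / 2 \<le> 4 * M * m" by simp
  moreover have "m < 2 * \<epsilon>" using v unfolding m_def by simp
  moreover have "M * m < M * (2 * \<epsilon>)" using \<open>m < 2 * \<epsilon>\<close> M(2) by simp
  ultimately have "\<delta> < 16 * M * \<epsilon>" by linarith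
  then show False using \<delta> by simp
qed

lemma separation:
  fixes \<gamma> :: "real \<Rightarrow> real^3"
  assumes l: "0 < l" and c: "continuous_on {-l/2..l/2} \<gamma>"
    and inj: "\<And>a b. a \<in> {-l/2..l/2} \<Longrightarrow> b \<in> {-l/2..l/2} \<Longrightarrow> \<gamma> a = \<gamma> b \<Longrightarrow> a = b \<or> (cl \<and> \<bar>a - b\<bar> = l)"
    and r: "r > 0"
  shows "\<exists>\<epsilon>>0. \<forall>a\<in>{-l/2..l/2}. \<forall>b\<in>{-l/2..l/2}. norm (\<gamma> a - \<gamma> b) < \<epsilon> \<longrightarrow>
           \<bar>a - b\<bar> < r \<or> (cl \<and> (\<bar>a - b - l\<bar> < r \<or> \<bar>a - b + l\<bar> < r))"
proof -
  define K0 where "K0 = {-l/2..l/2}"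
  define P where "P = (K0 \<times> K0) \<inter> {p. r \<le> \<bar>fst p - snd p\<bar> \<and> (cl \<longrightarrow> r \<le> \<bar>fst p - snd p - l\<bar> \<and> r \<le> \<bar>fst p - snd p + l\<bar>)}"
  have cl: "closed {p::real\<times>real. r \<le> \<bar>fst p - snd p\<bar> \<and> (cl \<longrightarrow> r \<le> \<bar>fst p - snd p - l\<bar> \<and> r \<le> \<bar>fst p - snd p + l\<bar>)}"
    by (cases cl) (auto intro!: closed_Collect_conj closed_Collect_le continuous_intros)
  have cP: "compact P" unfolding P_def K0_def
    by (intro compact_Int_closed compact_Times compact_Icc cl)
  show ?thesis
  proof (cases "P = {}")
    case True
    show ?thesis
      apply (rule exI[of _ 1])
      using True unfolding P_def K0_def by (auto simp: not_le)
  next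
    case False
    have cphi: "continuous_on P (\<lambda>p. norm (\<gamma> (fst p) - \<gamma> (snd p)))"
    proof -
      have "continuous_on P (\<lambda>x. \<gamma> (fst x))"
        by (rule continuous_on_compose2[OF c continuous_on_fst[OF continuous_on_id]]) (auto simp: P_def K0_def)
      moreover have "continuous_on P (\<lambda>x. \<gamma> (snd x))"
        by (rule continuous_on_compose2[OF c continuous_on_snd[OF continuous_on_id]]) (auto simp: P_def K0_def)
      ultimately show ?thesis by (auto intro!: continuous_intros)
    qed
    obtain p0 where p0: "p0 \<in> P" "\<forall>p\<in>P. norm (\<gamma> (fst p0) - \<gamma> (snd p0)) \<le> norm (\<gamma> (fst p) - \<gamma> (snd p))"
      using continuous_attains_inf[OF cP False cphi] by blast
    have pos: "norm (\<gamma> (fst p0) - \<gamma> (snd p0)) > 0"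
    proof (rule ccontr)
      assume "\<not> ?thesis"
      then have "\<gamma> (fst p0) = \<gamma> (snd p0)" by simp
      then have "fst p0 = snd p0 \<or> (cl \<and> \<bar>fst p0 - snd p0\<bar> = l)"
      proof -
        have "fst p0 \<in> K0" "snd p0 \<in> K0" using p0(1) unfolding P_def by auto
        then show ?thesis using inj[of "fst p0" "snd p0"] \<open>\<gamma> (fst p0) = \<gamma> (snd p0)\<close>
          unfolding K0_def by blast
      qed
      then show False using p0(1) r unfolding P_def by auto
    qed
    show ?thesis
    proof (intro exI[of _ "norm (\<gamma> (fst p0) - \<gamma> (snd p0))"] conjI pos ballI impI)
      fix a b assume ab: "a \<in> {-l/2..l/2}" "b \<in> {-l/2..l/2}"
        and lt: "norm (\<gamma> a - \<gamma> b) < norm (\<gamma> (fst p0) - \<gamma> (snd p0))"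
      have "(a, b) \<notin> P" using p0(2) lt by force
      then show "\<bar>a - b\<bar> < r \<or> (cl \<and> (\<bar>a - b - l\<bar> < r \<or> \<bar>a - b + l\<bar> < r))"
        using ab unfolding P_def K0_def by auto
    qed
  qed
qed

lemma nrm_period: "(\<And>t. g (t + l) = g t) \<Longrightarrow> nrm g (t + l) = nrm g t"
  unfolding nrm_def by simp

lemma reduce_pt:
  fixes f :: "real \<Rightarrow> 'b" and g :: "real \<Rightarrow> 'c"
  assumes l: "0 < l" and per: "\<And>t. f (t + l) = f t" "\<And>t. g (t + l) = g t"
  shows "\<exists>t'\<in>{-l/2..l/2}. f t' = f t \<and> g t' = g t"
proof -
  obtain k :: int where k: "t - real_of_int k * l \<in> {-l/2..<l/2}" using reduce_period[OF l] by blast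
  have "f (t + real_of_int (-k) * l) = f t" "g (t + real_of_int (-k) * l) = g t"
    using period_int[of f l] period_int[of g l] per by blast+
  then show ?thesis using k by (intro bexI[of _ "t - real_of_int k * l"]) auto
qed

lemma reduceK:
  fixes \<gamma> g2 :: "real \<Rightarrow> real^3"
  assumes l: "0 < l" and per: "cl \<Longrightarrow> (\<forall>t. \<gamma> (t + l) = \<gamma> t) \<and> (\<forall>t. g2 (t + l) = g2 t)"
    and t: "t \<in> Jset cl l"
  shows "\<exists>t'\<in>{-l/2..l/2}. \<gamma> t' = \<gamma> t \<and> nrm g2 t' = nrm g2 t"
proof (cases cl)
  case True
  have p1: "\<And>t. \<gamma> (t + l) = \<gamma> t" using per True by blast
  have p2: "\<And>t. nrm g2 (t + l) = nrm g2 t" using per True nrm_period[of g2 l] by blast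
  show ?thesis by (rule reduce_pt[of l \<gamma> "nrm g2", OF l p1 p2])
next
  case False
  then have "t \<in> {-l/2..l/2}" using t by (simp add: Jset_def)
  then show ?thesis by blast
qed

lemma strip_delta:
  fixes \<gamma> c \<xi> g1 g2 :: "real \<Rightarrow> real^3"
  assumes l: "0 < l" and U: "open U" "Jset cl l \<subseteq> U"
    and g1: "\<And>t. t\<in>U \<Longrightarrow> (\<gamma> has_vector_derivative g1 t) (at t)"
    and g2: "\<And>t. t\<in>U \<Longrightarrow> (g1 has_vector_derivative g2 t) (at t)"
    and cg1: "continuous_on U g1" and cg2: "continuous_on U g2"
    and n1: "\<And>t. t \<in> Jset cl l \<Longrightarrow> norm (g1 t) = 1"
    and nz: "\<And>t. t \<in> Jset cl l \<Longrightarrow> g2 t \<noteq> 0"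
    and per: "cl \<Longrightarrow> \<forall>t. g2 (t + l) = g2 t"
    and nf: "normal_form_strip cl l \<gamma> c \<xi>"
  shows "\<exists>\<sigma> a \<delta>. (\<sigma> = 1 \<or> \<sigma> = -1) \<and> (\<not> cl \<longrightarrow> a = 0) \<and>
           (\<forall>s\<in>Jset cl l. c s = \<gamma> (\<sigma> * s + a)) \<and> \<delta> > 0 \<and>
           (\<forall>s\<in>Jset cl l. norm (\<xi> s) = 1 \<and> \<delta> \<le> \<xi> s \<bullet> nrm g2 (\<sigma> * s + a))"
proof -
  note N = nf[unfolded normal_form_strip_def]
  note N1 = conjunct1[OF N]
  note N2 = conjunct1[OF conjunct2[OF N]]
  note N3 = conjunct1[OF conjunct2[OF conjunct2[OF N]]]
  note N4 = conjunct1[OF conjunct2[OF conjunct2[OF conjunct2[OF N]]]]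
  note N6 = conjunct2[OF conjunct2[OF conjunct2[OF conjunct2[OF conjunct2[OF N]]]]]
  obtain \<sigma> a where A: "(\<sigma> = 1 \<or> \<sigma> = -1) \<and> (\<not> cl \<longrightarrow> a = 0) \<and> (\<forall>s\<in>Jset cl l. c s = \<gamma> (\<sigma> * s + a))"
    using N1 by (elim exE) (rule that)
  have sa: "\<sigma> = 1 \<or> \<sigma> = -1" "\<not> cl \<longrightarrow> a = 0" using A by simp_all
  have cJ: "\<And>s. s\<in>Jset cl l \<Longrightarrow> c s = \<gamma> (\<sigma> * s + a)" using A by simp
  obtain U' where U': "open U'" "Jset cl l \<subseteq> U'" "smooth_on U' c" "smooth_on U' \<xi>"
    using N3 by blast
  have perx: "cl \<Longrightarrow> \<xi> (s + l) = \<xi> s" for s using N2 by blast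
  have nx: "\<And>s. s \<in> Jset cl l \<Longrightarrow> norm (\<xi> s) = 1" using N4 by blast
  obtain \<alpha> \<beta> :: "real \<Rightarrow> real" where ab: "\<And>s. s\<in>Jset cl l \<Longrightarrow>
        \<xi> s = cos (\<beta> s) *\<^sub>R frenet_e c s
               + sin (\<beta> s) *\<^sub>R (cos (\<alpha> s) *\<^sub>R frenet_n c s + sin (\<alpha> s) *\<^sub>R frenet_b c s) \<and>
        0 < \<bar>\<alpha> s\<bar> \<and> \<bar>\<alpha> s\<bar> < pi / 2 \<and> 0 < \<beta> s \<and> \<beta> s < pi"
    using N6 by blast
  obtain x1 x2 where cx: "continuous_on U' \<xi>"
    using smooth_facts[OF U'(4,1)] by metis
  have rp: "\<And>s. s \<in> Jset cl l \<Longrightarrow> deriv1 c s = \<sigma> *\<^sub>R g1 (\<sigma> * s + a) \<and> deriv2 c s = g2 (\<sigma> * s + a)"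
    by (rule reparam[OF l U g1 g2 cg1 cg2 sa cJ U'(1-3)])
  have affJ: "\<And>s. s \<in> Jset cl l \<Longrightarrow> \<sigma> * s + a \<in> Jset cl l" using aff_J[OF sa] by blast
  define q where "q s = \<xi> s \<bullet> nrm g2 (\<sigma> * s + a)" for s
  have pos: "q s > 0" if sJ: "s \<in> Jset cl l" for s
  proof -
    define t where "t = \<sigma> * s + a"
    have tJ: "t \<in> Jset cl l" using affJ[OF sJ] t_def by simp
    have fe: "frenet_e c s = \<sigma> *\<^sub>R g1 t" using rp[OF sJ] by (simp add: frenet_e_def t_def)
    have fn: "frenet_n c s = nrm g2 t" using rp[OF sJ] by (simp add: frenet_n_def nrm_def t_def)
    have fb: "frenet_b c s = cross3 (\<sigma> *\<^sub>R g1 t) (nrm g2 t)" using fe fn by (simp add: frenet_b_def)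
    have o: "g1 t \<bullet> g2 t = 0" by (rule orth[OF l U g2 cg1 cg2 n1 tJ])
    have "(\<sigma> *\<^sub>R g1 t) \<bullet> nrm g2 t = 0" using o by (simp add: nrm_def inner_commute)
    moreover have "norm (nrm g2 t) = 1" using nz[OF tJ] by (rule nrm_norm)
    ultimately have "\<xi> s \<bullet> nrm g2 t > 0"
      using ab[OF sJ] fe fn fb by (intro frenet_pos[where e = "\<sigma> *\<^sub>R g1 t"]) auto
    then show ?thesis by (simp add: q_def t_def)
  qed
  have cq: "continuous_on (Jset cl l) q"
  proof -
    have "continuous_on (Jset cl l) (nrm g2)"
      using nrm_cont[OF continuous_on_subset[OF cg2 U(2)] nz] by simp
    then have "continuous_on (Jset cl l) (\<lambda>s. nrm g2 (\<sigma> * s + a))"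
      by (rule continuous_on_compose2) (auto intro!: continuous_intros affJ)
    then show ?thesis unfolding q_def
      using continuous_on_subset[OF cx U'(2)] by (intro continuous_intros) auto
  qed
  have KJ: "{-l/2..l/2} \<subseteq> Jset cl l" by (auto simp: Jset_def)
  have red: "\<exists>s0\<in>{-l/2..l/2}. q s = q s0" if sJ: "s \<in> Jset cl l" for s
  proof (cases cl)
    case False then show ?thesis using sJ by (auto simp: Jset_def)
  next
    case True
    obtain k :: int where k: "s - real_of_int k * l \<in> {-l/2..<l/2}" using reduce_period[OF l] by blast
    have pn: "nrm g2 (t + l) = nrm g2 t" for t using nrm_period per True by metis
    have "\<xi> (s + real_of_int (-k) * l) = \<xi> s" using period_int[of \<xi> l] perx True by blast
    moreover have "nrm g2 (\<sigma> * (s - real_of_int k * l) + a) = nrm g2 (\<sigma> * s + a)"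
    proof (cases "\<sigma> = 1")
      case True
      then show ?thesis using period_int[of "nrm g2" l "\<sigma> * s + a" "-k"] pn by (simp add: algebra_simps)
    next
      case False
      then have "\<sigma> = -1" using sa by simp
      then show ?thesis using period_int[of "nrm g2" l "\<sigma> * s + a" "k"] pn by (simp add: algebra_simps)
    qed
    ultimately have "q (s - real_of_int k * l) = q s" unfolding q_def by simp
    then show ?thesis using k by (intro bexI[of _ "s - real_of_int k * l"]) auto
  qed
  obtain \<delta> where \<delta>: "\<delta> > 0" "\<forall>s\<in>Jset cl l. \<delta> \<le> q s"
  proof -
    have ne: "{-l/2..l/2} \<noteq> {}" using l by auto
    have "\<exists>\<delta>>0. \<forall>s\<in>Jset cl l. \<delta> \<le> q s"
      by (rule unif_pos[OF compact_Icc ne continuous_on_subset[OF cq KJ]])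
        (use pos KJ red in auto)
    then show ?thesis using that by blast
  qed
  show ?thesis
    apply (rule exI[of _ \<sigma>], rule exI[of _ a], rule exI[of _ \<delta>])
    using sa cJ \<delta> nx unfolding q_def by simp
qed

theorem proposition1p11:
  fixes cl :: bool and l :: real
    and \<gamma> cF \<xi>F cG \<xi>G :: "real \<Rightarrow> real^3"
  assumes "embedded_curve cl l \<gamma>"
    and "normal_form_strip cl l \<gamma> cF \<xi>F"
    and "normal_form_strip cl l \<gamma> cG \<xi>G"
  shows "\<exists>\<epsilon>0>0. \<forall>\<epsilon>. 0 < \<epsilon> \<and> \<epsilon> \<le> \<epsilon>0 \<longrightarrow>
           ruled cF \<xi>F ` Omega_plus cl l \<epsilon> \<inter> ruled cG \<xi>G ` Omega_minus cl l \<epsilon> = {}"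
proof -
  define J where "J = Jset cl l"
  note E = assms(1)[unfolded embedded_curve_def]
  have l: "0 < l" using conjunct1[OF E] .
  note E2 = conjunct1[OF conjunct2[OF E]]
  note E3 = conjunct1[OF conjunct2[OF conjunct2[OF E]]]
  note E4 = conjunct1[OF conjunct2[OF conjunct2[OF conjunct2[OF E]]]]
  note E5 = conjunct1[OF conjunct2[OF conjunct2[OF conjunct2[OF conjunct2[OF E]]]]]
  note E6 = conjunct2[OF conjunct2[OF conjunct2[OF conjunct2[OF conjunct2[OF E]]]]]
  obtain U where U: "open U" "Jset cl l \<subseteq> U" "smooth_on U \<gamma>"
    using E2 by (elim exE conjE) (rule that)
  obtain g1 g2 where g1: "\<And>t. t\<in>U \<Longrightarrow> (\<gamma> has_vector_derivative g1 t) (at t)"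
    and g2: "\<And>t. t\<in>U \<Longrightarrow> (g1 has_vector_derivative g2 t) (at t)"
    and c0: "continuous_on U \<gamma>" and cg1: "continuous_on U g1" and cg2: "continuous_on U g2"
    and dg1: "\<And>t. t\<in>U \<Longrightarrow> deriv1 \<gamma> t = g1 t" and dg2: "\<And>t. t\<in>U \<Longrightarrow> deriv2 \<gamma> t = g2 t"
    using smooth_facts[OF U(3,1)] by blast
  have n1: "\<And>t. t \<in> Jset cl l \<Longrightarrow> norm (g1 t) = 1" using E4 dg1 U(2) by (metis subsetD)
  have nz: "\<And>t. t \<in> Jset cl l \<Longrightarrow> g2 t \<noteq> 0" using E5 dg2 U(2) by (metis subsetD)
  have pg: "\<And>t. cl \<Longrightarrow> \<gamma> (t + l) = \<gamma> t" using E3 by blast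
  have UU: "cl \<Longrightarrow> U = UNIV" using U(2) by (auto simp: Jset_def)
  have pg1: "\<And>t. cl \<Longrightarrow> g1 (t + l) = g1 t"
    using period_deriv[of \<gamma> l g1] pg g1 UU by blast
  have pg2: "\<And>t. cl \<Longrightarrow> g2 (t + l) = g2 t"
    using period_deriv[of g1 l g2] pg1 g2 UU by blast
  have per2: "cl \<Longrightarrow> \<forall>t. g2 (t + l) = g2 t" using pg2 by blast
  have orthN: "g1 t \<bullet> nrm g2 t = 0" if "t \<in> Jset cl l" for t
    using orth[OF l U(1,2) g2 cg1 cg2 n1 that] by (simp add: nrm_def)
  obtain \<sigma>F aF \<delta>F where F: "(\<sigma>F = 1 \<or> \<sigma>F = -1)" "(\<not> cl \<longrightarrow> aF = 0)"
      "(\<forall>s\<in>Jset cl l. cF s = \<gamma> (\<sigma>F * s + aF))" "\<delta>F > 0"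
      "(\<forall>s\<in>Jset cl l. norm (\<xi>F s) = 1 \<and> \<delta>F \<le> \<xi>F s \<bullet> nrm g2 (\<sigma>F * s + aF))"
  proof -
    have "\<exists>\<sigma> a \<delta>. (\<sigma> = 1 \<or> \<sigma> = -1) \<and> (\<not> cl \<longrightarrow> a = 0) \<and>
           (\<forall>s\<in>Jset cl l. cF s = \<gamma> (\<sigma> * s + a)) \<and> \<delta> > 0 \<and>
           (\<forall>s\<in>Jset cl l. norm (\<xi>F s) = 1 \<and> \<delta> \<le> \<xi>F s \<bullet> nrm g2 (\<sigma> * s + a))"
      by (rule strip_delta[where U=U and ?g1.0=g1 and ?g2.0=g2, OF l U(1,2) _ _ cg1 cg2 _ _ per2 assms(2)])
        (rule g1 g2 n1 nz; assumption)+
    then show ?thesis by (elim exE conjE) (rule that)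
  qed
  obtain \<sigma>G aG \<delta>G where G: "(\<sigma>G = 1 \<or> \<sigma>G = -1)" "(\<not> cl \<longrightarrow> aG = 0)"
      "(\<forall>s\<in>Jset cl l. cG s = \<gamma> (\<sigma>G * s + aG))" "\<delta>G > 0"
      "(\<forall>s\<in>Jset cl l. norm (\<xi>G s) = 1 \<and> \<delta>G \<le> \<xi>G s \<bullet> nrm g2 (\<sigma>G * s + aG))"
  proof -
    have "\<exists>\<sigma> a \<delta>. (\<sigma> = 1 \<or> \<sigma> = -1) \<and> (\<not> cl \<longrightarrow> a = 0) \<and>
           (\<forall>s\<in>Jset cl l. cG s = \<gamma> (\<sigma> * s + a)) \<and> \<delta> > 0 \<and>
           (\<forall>s\<in>Jset cl l. norm (\<xi>G s) = 1 \<and> \<delta> \<le> \<xi>G s \<bullet> nrm g2 (\<sigma> * s + a))"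
      by (rule strip_delta[where U=U and ?g1.0=g1 and ?g2.0=g2, OF l U(1,2) _ _ cg1 cg2 _ _ per2 assms(3)])
        (rule g1 g2 n1 nz; assumption)+
    then show ?thesis by (elim exE conjE) (rule that)
  qed
  define \<delta> where "\<delta> = min \<delta>F \<delta>G"
  have \<delta>: "\<delta> > 0" "\<delta> \<le> \<delta>F" "\<delta> \<le> \<delta>G" using F(4) G(4) by (auto simp: \<delta>_def)
  define K where "K = (if cl then {-2*l..2*l} else {-l/2..l/2})"
  have KJ: "K \<subseteq> Jset cl l" by (auto simp: K_def Jset_def)
  have KU: "K \<subseteq> U" using KJ U(2) by blast
  have Kc: "convex K" "compact K" by (auto simp: K_def)
  have K0K: "{-l/2..l/2} \<subseteq> K" using l by (auto simp: K_def)
  obtain M where M: "M > 0" "\<And>t. t \<in> K \<Longrightarrow> norm (g2 t) \<le> M"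
  proof -
    have "compact (g2 ` K)" by (rule compact_continuous_image[OF continuous_on_subset[OF cg2 KU] Kc(2)])
    then have "bounded (g2 ` K)" by (rule compact_imp_bounded)
    then show ?thesis using that unfolding bounded_pos by auto
  qed
  have cN: "continuous_on K (nrm g2)"
    using nrm_cont[OF continuous_on_subset[OF cg2 KU]] nz KJ by blast
  obtain r0 where r0: "r0 > 0" "\<And>x x'. x \<in> K \<Longrightarrow> x' \<in> K \<Longrightarrow> dist x' x < r0 \<Longrightarrow> dist (nrm g2 x') (nrm g2 x) < \<delta> / 2"
  proof -
    have "uniformly_continuous_on K (nrm g2)" by (rule compact_uniformly_continuous[OF cN Kc(2)])
    then show ?thesis using that \<delta>(1) unfolding uniformly_continuous_on_def
      by (meson half_gt_zero)
  qed
  define r where "r = min r0 (1 / (2 * M))"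
  have r: "r > 0" "r \<le> r0" "r \<le> 1 / (2 * M)" using r0 M by (auto simp: r_def)
  have inj: "a = b \<or> (cl \<and> \<bar>a - b\<bar> = l)"
    if ab: "a \<in> {-l/2..l/2}" "b \<in> {-l/2..l/2}" "\<gamma> a = \<gamma> b" for a b
  proof (cases cl)
    case False
    then show ?thesis using E6 ab by (auto simp: Jfund_def inj_on_def)
  next
    case True
    have e: "\<gamma> (l/2) = \<gamma> (-l/2)" using pg[OF True, of "-l/2"] by simp
    define a' where "a' = (if a = l/2 then -l/2 else a)"
    define b' where "b' = (if b = l/2 then -l/2 else b)"
    have "a' \<in> Jfund cl l" "b' \<in> Jfund cl l" "\<gamma> a' = \<gamma> b'"
      using ab e True l by (auto simp: a'_def b'_def Jfund_def)
    then have "a' = b'" using E6 by (auto simp: inj_on_def)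
    then show ?thesis using True ab l unfolding a'_def b'_def by (auto split: if_splits)
  qed
  have c0K: "continuous_on {-l/2..l/2} \<gamma>" using continuous_on_subset[OF c0] K0K KU by blast
  obtain \<epsilon>1 where \<epsilon>1: "\<epsilon>1 > 0" "\<And>a b. a\<in>{-l/2..l/2} \<Longrightarrow> b\<in>{-l/2..l/2} \<Longrightarrow> norm (\<gamma> a - \<gamma> b) < \<epsilon>1 \<Longrightarrow>
           \<bar>a - b\<bar> < r \<or> (cl \<and> (\<bar>a - b - l\<bar> < r \<or> \<bar>a - b + l\<bar> < r))"
    using separation[OF l c0K inj r(1)] by blast
  define \<epsilon>0 where "\<epsilon>0 = min (\<epsilon>1 / 2) (\<delta> / (16 * M))"
  have \<epsilon>0: "\<epsilon>0 > 0" "\<epsilon>0 \<le> \<epsilon>1 / 2" "16 * M * \<epsilon>0 \<le> \<delta>"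
    using \<epsilon>1 \<delta> M by (auto simp: \<epsilon>0_def min_def field_simps)
  show ?thesis
  proof (intro exI[of _ \<epsilon>0] conjI \<epsilon>0(1) allI impI)
    fix \<epsilon> assume \<epsilon>: "0 < \<epsilon> \<and> \<epsilon> \<le> \<epsilon>0"
    show "ruled cF \<xi>F ` Omega_plus cl l \<epsilon> \<inter> ruled cG \<xi>G ` Omega_minus cl l \<epsilon> = {}"
    proof (rule equals0I)
      fix p assume "p \<in> ruled cF \<xi>F ` Omega_plus cl l \<epsilon> \<inter> ruled cG \<xi>G ` Omega_minus cl l \<epsilon>"
      then obtain s v s' v' where sv: "s \<in> Jset cl l" "0 < v" "v < \<epsilon>"
        and sv': "s' \<in> Jset cl l" "-\<epsilon> < v'" "v' < 0"
        and p: "p = cF s + v *\<^sub>R \<xi>F s" "p = cG s' + v' *\<^sub>R \<xi>G s'"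
        unfolding Omega_plus_def Omega_minus_def ruled_def by auto
      define t1 where "t1 = \<sigma>F * s + aF"
      define t2 where "t2 = \<sigma>G * s' + aG"
      have t1J: "t1 \<in> Jset cl l" unfolding t1_def by (rule aff_J[OF F(1,2) sv(1)])
      have t2J: "t2 \<in> Jset cl l" unfolding t2_def by (rule aff_J[OF G(1,2) sv'(1)])
      have perb: "cl \<Longrightarrow> (\<forall>t. \<gamma> (t + l) = \<gamma> t) \<and> (\<forall>t. g2 (t + l) = g2 t)" using pg pg2 by blast
      obtain u1 where u1: "u1 \<in> {-l/2..l/2}" "\<gamma> u1 = \<gamma> t1" "nrm g2 u1 = nrm g2 t1"
        using reduceK[OF l perb t1J] by blast
      obtain u2 where u2: "u2 \<in> {-l/2..l/2}" "\<gamma> u2 = \<gamma> t2" "nrm g2 u2 = nrm g2 t2"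
        using reduceK[OF l perb t2J] by blast
      have eq: "\<gamma> u1 + v *\<^sub>R \<xi>F s = \<gamma> u2 + v' *\<^sub>R \<xi>G s'"
        using p F(3) G(3) sv(1) sv'(1) u1 u2 unfolding t1_def t2_def by simp
      have nX: "norm (\<xi>F s) = 1" and nY: "norm (\<xi>G s') = 1" using F(5) G(5) sv(1) sv'(1) by auto
      have "\<gamma> u1 = (\<gamma> u2 + v' *\<^sub>R \<xi>G s') - v *\<^sub>R \<xi>F s" using eq by (simp add: eq_diff_eq)
      then have "\<gamma> u1 - \<gamma> u2 = v' *\<^sub>R \<xi>G s' - v *\<^sub>R \<xi>F s" by (simp add: algebra_simps)
      then have "norm (\<gamma> u1 - \<gamma> u2) = norm (v' *\<^sub>R \<xi>G s' - v *\<^sub>R \<xi>F s)" by simp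
      also have "\<dots> \<le> norm (v' *\<^sub>R \<xi>G s') + norm (v *\<^sub>R \<xi>F s)" by (rule norm_triangle_ineq4)
      also have "\<dots> < 2 * \<epsilon>" using nX nY sv sv' by simp
      also have "\<dots> \<le> \<epsilon>1" using \<epsilon> \<epsilon>0 by simp
      finally have close: "\<bar>u1 - u2\<bar> < r \<or> (cl \<and> (\<bar>u1 - u2 - l\<bar> < r \<or> \<bar>u1 - u2 + l\<bar> < r))"
        using \<epsilon>1(2)[OF u1(1) u2(1)] by blast
      obtain u3 where u3: "u3 \<in> K" "\<bar>u3 - u1\<bar> < r" "\<gamma> u3 = \<gamma> u2" "nrm g2 u3 = nrm g2 u2"
      proof -
        have pn: "cl \<Longrightarrow> nrm g2 (t + l) = nrm g2 t" for t using nrm_period[of g2 l t] pg2 by blast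
        show ?thesis
        proof (cases "\<bar>u1 - u2\<bar> < r")
          case True then show ?thesis using that[of u2] u2(1) K0K by auto
        next
          case False
          then have clt: "cl" using close by blast
          show ?thesis
          proof (cases "\<bar>u1 - u2 - l\<bar> < r")
            case True
            have "u2 + l \<in> K" using u2(1) clt l by (auto simp: K_def)
            then show ?thesis using that[of "u2 + l"] True pg[OF clt] pn[OF clt] by auto
          next
            case False
            then have "\<bar>u1 - u2 + l\<bar> < r" using close \<open>\<not> \<bar>u1 - u2\<bar> < r\<close> by blast
            moreover have "u2 - l \<in> K" using u2(1) clt l by (auto simp: K_def)
            moreover have "\<gamma> (u2 - l) = \<gamma> u2" using pg[OF clt, of "u2 - l"] by simp
            moreover have "nrm g2 (u2 - l) = nrm g2 u2" using pn[OF clt, of "u2 - l"] by simp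
            ultimately show ?thesis using that[of "u2 - l"] by auto
          qed
        qed
      qed
      have u1K: "u1 \<in> K" using u1(1) K0K by blast
      have u1J: "u1 \<in> Jset cl l" using u1K KJ by blast
      have Xn: "\<delta> \<le> \<xi>F s \<bullet> nrm g2 u1" using F(5) sv(1) \<delta>(2) u1(3) unfolding t1_def by force
      have Yn2: "\<delta> \<le> \<xi>G s' \<bullet> nrm g2 u3" using G(5) sv'(1) \<delta>(3) u2(3) u3(4) unfolding t2_def by force
      have "dist (nrm g2 u3) (nrm g2 u1) < \<delta> / 2"
        using r0(2)[OF u1K u3(1)] u3(2) r(2) by (simp add: dist_real_def)
      then have dn: "norm (nrm g2 u3 - nrm g2 u1) < \<delta> / 2" by (simp add: dist_norm)
      have "\<xi>G s' \<bullet> (nrm g2 u3 - nrm g2 u1) \<le> norm (\<xi>G s') * norm (nrm g2 u3 - nrm g2 u1)"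
        by (rule norm_cauchy_schwarz)
      then have "\<xi>G s' \<bullet> (nrm g2 u3 - nrm g2 u1) < \<delta> / 2" using nY dn by simp
      then have Yn: "\<delta> / 2 \<le> \<xi>G s' \<bullet> nrm g2 u1" using Yn2 by (simp add: inner_diff_right)
      have eq': "\<gamma> u1 + v *\<^sub>R \<xi>F s = \<gamma> u3 + v' *\<^sub>R \<xi>G s'" using eq u3(3) by simp
      have h: "\<bar>u3 - u1\<bar> \<le> 1 / (2 * M)" using u3(2) r(3) by simp
      have sm: "16 * M * \<epsilon> \<le> \<delta>"
        using \<epsilon> \<epsilon>0(3) M(1) by (smt (verit) mult_left_mono)
      have d1K: "\<And>t. t \<in> K \<Longrightarrow> (\<gamma> has_vector_derivative g1 t) (at t)" using g1 KU by blast
      have d2K: "\<And>t. t \<in> K \<Longrightarrow> (g1 has_vector_derivative g2 t) (at t)" using g2 KU by blast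
      show False
        by (rule core[where K=K and ?t1.0=u1 and ?t2.0=u3 and \<gamma>=\<gamma> and ?g1.0=g1 and ?g2.0=g2 and M=M,
              OF Kc(1) u1K u3(1) d1K d2K M(2,1) h eq' sv(2,3) sv'(3,2) nX nY n1[OF u1J]
              orthN[OF u1J] nrm_norm[of g2 u1, OF nz[OF u1J]] Xn Yn sm])
    qed
  qed
qed

end
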